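(* Let $\mathbb{C}[X]^*$ be the linear dual of $\mathbb{C}[X]$ with the convolution product $(f*g)(X^n)=\sum_{k=0}^n\binom{n}{k}f(X^k)g(X^{n-k})$, let $I=\{f\in\mathbb{C}[X]^*\mid f(1)=0\}$, let $\mathbb{C}[X]^{\circ}$ be the subalgebra of those $f\in\mathbb{C}[X]^*$ vanishing on some non-zero ideal of $\mathbb{C}[X]$ (the linearly recursive sequences), and $J=I\cap\mathbb{C}[X]^{\circ}$. Let $\widehat{\iota}:\varprojlim_n\mathbb{C}[X]^\circ/J^n\to\varprojlim_n\mathbb{C}[X]^*/I^n\cong\mathbb{C}[X]^*$ be the map induced by the inclusion. Then $\widehat{\iota}$ is a split surjection which is not injective; consequently the $J$-adic topology on $\mathbb{C}[X]^\circ$ is strictly finer than (and not equivalent to) the topology induced from the $I$-adic topology on $\mathbb{C}[X]^*$. Explicitly, with $\xi(X^n)=\delta_{n,1}$ and $\phi_1(X^n)=1$ for all $n$, the element $\big(\phi_1-\sum_{k=0}^n\frac{1}{k!}\xi^k+J^{n+1}\big)_{n\geq0}$ is a non-zero element of the kernel of $\widehat{\iota}$.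
   Context: Under $f\mapsto\sum_{k\geq0}f(X^k/k!)Z^k$, $\mathbb{C}[X]^*\cong\mathbb{C}[[Z]]$ as algebras and $I^n$ corresponds to $\langle Z^n\rangle$; the $I$-adic topology corresponds to the Krull topology. Powers $\xi^k$ are taken in the convolution product with $\xi^0$ the unit $\varepsilon$, $\varepsilon(X^n)=\delta_{n,0}$. *)

theory Defs
  imports "HOL-Analysis.Analysis" "HOL-Computational_Algebra.Polynomial" "HOL-Library.Function_Algebras"
begin

text \<open>An element f of the linear dual C[X]* is represented by its values on the
monomial basis: f n = f(X^n).\<close>

type_synonym dual = "nat \<Rightarrow> complex"

definition dual_app :: "dual \<Rightarrow> complex poly \<Rightarrow> complex" where
  "dual_app f q = (\<Sum>i\<le>degree q. coeff q i * f i)"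

definition conv :: "dual \<Rightarrow> dual \<Rightarrow> dual" where
  "conv f g = (\<lambda>n. \<Sum>k\<le>n. of_nat (n choose k) * f k * g (n - k))"

definition eps :: dual where
  "eps = (\<lambda>n. if n = 0 then 1 else 0)"

primrec cpow :: "dual \<Rightarrow> nat \<Rightarrow> dual" where
  "cpow f 0 = eps"
| "cpow f (Suc k) = conv f (cpow f k)"

definition xi :: dual where
  "xi = (\<lambda>n. if n = 1 then 1 else 0)"

definition phi1 :: dual where
  "phi1 = (\<lambda>n. 1)"

definition poly_ideal :: "complex poly set \<Rightarrow> bool" where
  "poly_ideal K \<longleftrightarrow> 0 \<in> K \<and> (\<forall>a\<in>K. \<forall>b\<in>K. a + b \<in> K) \<and> (\<forall>a\<in>K. \<forall>q. q * a \<in> K)"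

definition linrec :: "dual set" where
  "linrec = {f. \<exists>K. poly_ideal K \<and> K \<noteq> {0} \<and> (\<forall>q\<in>K. dual_app f q = 0)}"

definition augI :: "dual set" where
  "augI = {f. f 0 = 0}"

definition augJ :: "dual set" where
  "augJ = augI \<inter> linrec"

primrec prods :: "dual set \<Rightarrow> nat \<Rightarrow> dual set" where
  "prods K 0 = {eps}"
| "prods K (Suc n) = {conv a b | a b. a \<in> K \<and> b \<in> prods K n}"

definition ideal_pow :: "dual set \<Rightarrow> dual set \<Rightarrow> nat \<Rightarrow> dual set" where
  "ideal_pow A K n = {f. \<exists>(F::nat set) a p. finite F \<and> (\<forall>i\<in>F. a i \<in> A \<and> p i \<in> prods K n)
       \<and> f = (\<Sum>i\<in>F. conv (a i) (p i))}"

definition Ipow :: "nat \<Rightarrow> dual set" where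
  "Ipow n = ideal_pow UNIV augI n"

definition Jpow :: "nat \<Rightarrow> dual set" where
  "Jpow n = ideal_pow linrec augJ n"

text \<open>Inverse limit of A / P(n+1), n >= 0, as compatible sequences of representatives
(index n carries a class modulo P(n+1)), together with equality of elements.\<close>
definition inv_lim :: "dual set \<Rightarrow> (nat \<Rightarrow> dual set) \<Rightarrow> (nat \<Rightarrow> dual) set" where
  "inv_lim A P = {a. (\<forall>n. a n \<in> A) \<and> (\<forall>n. a (Suc n) - a n \<in> P (Suc n))}"

definition lim_eq :: "(nat \<Rightarrow> dual set) \<Rightarrow> (nat \<Rightarrow> dual) \<Rightarrow> (nat \<Rightarrow> dual) \<Rightarrow> bool" where
  "lim_eq P a b \<longleftrightarrow> (\<forall>n. a n - b n \<in> P (Suc n))"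

definition adic_topology :: "dual set \<Rightarrow> (nat \<Rightarrow> dual set) \<Rightarrow> dual topology" where
  "adic_topology S P = topology (\<lambda>U. U \<subseteq> S \<and> (\<forall>x\<in>U. \<exists>n. \<forall>y\<in>P n. x + y \<in> U))"

end

theory Submission
  imports Defs "HOL-Computational_Algebra.Fundamental_Theorem_Algebra"
begin


lemma sum_fun_apply: "(\<Sum>k\<in>A. (f k :: nat \<Rightarrow> complex)) x = (\<Sum>k\<in>A. f k x)"
  by (induction A rule: infinite_finite_induct) auto

lemma zero_lam[simp]: "(\<lambda>n. 0::complex) = 0" by (simp add: zero_fun_def)

section \<open>EGF\<close>

definition E :: "dual \<Rightarrow> complex fps" where
  "E f = Abs_fps (\<lambda>n. f n / fact n)"

lemma E_nth[simp]: "fps_nth (E f) n = f n / fact n" by (simp add: E_def)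

lemma E_inj: "E f = E g \<Longrightarrow> f = g"
proof
  fix n assume "E f = E g"
  then have "fps_nth (E f) n = fps_nth (E g) n" by simp
  then show "f n = g n" by simp
qed

lemma E_conv: "E (conv f g) = E f * E g"
proof (rule fps_ext)
  fix n
  have "fps_nth (E f * E g) n = (\<Sum>i=0..n. f i / fact i * (g (n-i) / fact (n-i)))"
    by (simp add: fps_mult_nth)
  also have "\<dots> = (\<Sum>i\<le>n. of_nat (n choose i) * f i * g (n-i) / fact n)"
    unfolding atLeast0AtMost
    by (rule sum.cong) (auto simp: binomial_fact field_simps)
  also have "\<dots> = fps_nth (E (conv f g)) n"
    by (simp add: conv_def sum_divide_distrib)
  finally show "fps_nth (E (conv f g)) n = fps_nth (E f * E g) n" by simp
qed

lemma E_add: "E (f + g) = E f + E g"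
  by (rule fps_ext) (simp add: add_divide_distrib)
lemma E_diff: "E (f - g) = E f - E g"
  by (rule fps_ext) (simp add: diff_divide_distrib)
lemma E_scal: "E (\<lambda>n. c * f n) = fps_const c * E f"
  by (rule fps_ext) simp
lemma E_zero: "E 0 = 0"
  by (rule fps_ext) simp
lemma E_eps: "E eps = 1"
  by (rule fps_ext) (simp add: eps_def)
lemma E_sh: "E (\<lambda>n. f (Suc n)) = fps_deriv (E f)"
  by (rule fps_ext) (simp add: fact_Suc field_simps del: of_nat_Suc)
lemma E_sum: "finite A \<Longrightarrow> E (\<Sum>i\<in>A. g i) = (\<Sum>i\<in>A. E (g i))"
  by (induction A rule: finite_induct) (simp_all only: sum.empty E_zero sum.insert E_add not_False_eq_True)

lemma conv_comm: "conv f g = conv g f"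
  by (rule E_inj) (simp add: E_conv mult.commute)
lemma conv_assoc: "conv (conv f g) h = conv f (conv g h)"
  by (rule E_inj) (simp add: E_conv mult.assoc)
lemma conv_add_left: "conv (f + g) h = conv f h + conv g h"
  by (rule E_inj) (simp add: E_conv E_add distrib_right)
lemma conv_add_right: "conv h (f + g) = conv h f + conv h g"
  by (rule E_inj) (simp add: E_conv E_add distrib_left)
lemma conv_diff_left: "conv (f - g) h = conv f h - conv g h"
  by (rule E_inj) (simp add: E_conv E_diff left_diff_distrib)
lemma conv_diff_right: "conv h (f - g) = conv h f - conv h g"
  by (rule E_inj) (simp add: E_conv E_diff right_diff_distrib)
lemma conv_scal_left: "conv (\<lambda>n. c * f n) g = (\<lambda>n. c * conv f g n)"
  by (rule E_inj) (simp add: E_conv E_scal mult.assoc)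
lemma conv_scal_right: "conv f (\<lambda>n. c * g n) = (\<lambda>n. c * conv f g n)"
  by (rule E_inj) (simp add: E_conv E_scal mult.assoc mult.left_commute)
lemma conv_eps_right[simp]: "conv f eps = f"
  by (rule E_inj) (simp add: E_conv E_eps)
lemma conv_eps_left[simp]: "conv eps f = f"
  by (rule E_inj) (simp add: E_conv E_eps)
lemma conv_zero_left[simp]: "conv 0 f = 0"
  by (rule E_inj) (simp add: E_conv E_zero)
lemma conv_zero_right[simp]: "conv f 0 = 0"
  by (rule E_inj) (simp add: E_conv E_zero)
lemma conv_zero_left'[simp]: "conv (\<lambda>n. 0) f = (\<lambda>n. 0)"
  by (simp add: conv_def)
lemma conv_zero_right'[simp]: "conv f (\<lambda>n. 0) = (\<lambda>n. 0)"
  by (simp add: conv_def)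
lemma conv_sum_left: "finite A \<Longrightarrow> conv (\<Sum>i\<in>A. g i) h = (\<Sum>i\<in>A. conv (g i) h)"
  by (induction A rule: finite_induct) (simp_all only: sum.empty conv_zero_left sum.insert conv_add_left not_False_eq_True)
lemma conv_sum_right: "finite A \<Longrightarrow> conv h (\<Sum>i\<in>A. g i) = (\<Sum>i\<in>A. conv h (g i))"
  by (induction A rule: finite_induct) (simp_all only: sum.empty conv_zero_right sum.insert conv_add_right not_False_eq_True)
lemma conv_0: "conv f g 0 = f 0 * g 0"
  by (simp add: conv_def)

section \<open>Polynomial action\<close>

definition pact :: "complex poly \<Rightarrow> dual \<Rightarrow> dual" where
  "pact P f = (\<lambda>n. \<Sum>i\<le>degree P. coeff P i * f (n+i))"

lemma pact_bound: "degree P \<le> M \<Longrightarrow> pact P f n = (\<Sum>i\<le>M. coeff P i * f (n+i))"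
  unfolding pact_def by (rule sum.mono_neutral_left) (auto simp: coeff_eq_0)

lemma pact_pCons: "pact (pCons a p) f n = a * f n + pact p f (Suc n)"
proof -
  have "pact (pCons a p) f n = (\<Sum>i\<le>Suc (degree p). coeff (pCons a p) i * f (n+i))"
    by (rule pact_bound) (simp add: degree_pCons_le)
  also have "\<dots> = a * f n + (\<Sum>i\<le>degree p. coeff p i * f (Suc n + i))"
    by (subst sum.atMost_Suc_shift) simp
  also have "(\<Sum>i\<le>degree p. coeff p i * f (Suc n + i)) = pact p f (Suc n)"
    by (simp add: pact_def)
  finally show ?thesis .
qed

lemma pact_0_poly[simp]: "pact 0 f = 0"
  by (simp add: pact_def fun_eq_iff)
lemma pact_zero_fun[simp]: "pact P 0 = 0"
  by (simp add: pact_def fun_eq_iff)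
lemma pact_zero_fun'[simp]: "pact P (\<lambda>n. 0) = (\<lambda>n. 0)"
  by (simp add: pact_def fun_eq_iff)
lemma pact_one[simp]: "pact 1 f = f"
  by (simp add: pact_def fun_eq_iff)

lemma pact_add_poly: "pact (P + Q) f = pact P f + pact Q f"
proof (rule ext)
  fix n
  let ?M = "max (degree P) (degree Q)"
  have "pact (P+Q) f n = (\<Sum>i\<le>?M. coeff (P+Q) i * f (n+i))"
    by (rule pact_bound) (auto intro: degree_add_le)
  moreover have "pact P f n = (\<Sum>i\<le>?M. coeff P i * f (n+i))"
    by (rule pact_bound) simp
  moreover have "pact Q f n = (\<Sum>i\<le>?M. coeff Q i * f (n+i))"
    by (rule pact_bound) simp
  ultimately show "pact (P + Q) f n = (pact P f + pact Q f) n"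
    by (simp add: distrib_right sum.distrib)
qed

lemma pact_smult: "pact (smult c P) f = (\<lambda>n. c * pact P f n)"
proof (rule ext)
  fix n
  have "pact (smult c P) f n = (\<Sum>i\<le>degree P. coeff (smult c P) i * f (n+i))"
    by (rule pact_bound) (simp add: degree_smult_le)
  then show "pact (smult c P) f n = c * pact P f n"
    by (simp add: pact_def sum_distrib_left mult.assoc)
qed

lemma pact_mult: "pact (P * Q) f = pact P (pact Q f)"
proof (induction P rule: pCons_induct)
  case 0
  then show ?case by simp
next
  case (pCons a p)
  show ?case
  proof (rule ext)
    fix n
    have "pact (pCons a p * Q) f n = pact (smult a Q + pCons 0 (p * Q)) f n"
      by simp
    also have "\<dots> = a * pact Q f n + pact (p * Q) f (Suc n)"
      by (simp add: pact_add_poly pact_smult pact_pCons)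
    also have "\<dots> = pact (pCons a p) (pact Q f) n"
      by (simp add: pact_pCons pCons.IH)
    finally show "pact (pCons a p * Q) f n = pact (pCons a p) (pact Q f) n" .
  qed
qed

lemma pact_comm: "pact P (pact Q f) = pact Q (pact P f)"
  by (metis pact_mult mult.commute)

lemma pact_add_fun: "pact P (f + g) = pact P f + pact P g"
  by (simp add: pact_def fun_eq_iff distrib_left sum.distrib)
lemma pact_diff_fun: "pact P (f - g) = pact P f - pact P g"
  by (simp add: pact_def fun_eq_iff right_diff_distrib sum_subtractf)
lemma pact_scal_fun: "pact P (\<lambda>n. c * f n) = (\<lambda>n. c * pact P f n)"
  by (simp add: pact_def fun_eq_iff sum_distrib_left mult.left_commute)
lemma pact_sum_fun: "finite A \<Longrightarrow> pact P (\<Sum>i\<in>A. g i) = (\<Sum>i\<in>A. pact P (g i))"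
  by (induction A rule: finite_induct) (simp_all only: sum.empty pact_zero_fun sum.insert pact_add_fun not_False_eq_True)

lemma pact_lin: "pact [:-c,1:] f = (\<lambda>n. f (Suc n) - c * f n)"
  by (rule ext) (simp add: pact_pCons)

lemma pact_Xpow: "pact ([:0,1:]^m) f = (\<lambda>n. f (n+m))"
proof (induction m)
  case 0 then show ?case by simp
next
  case (Suc m)
  have "pact ([:0,1:]^Suc m) f = pact [:-0,1:] (pact ([:0,1:]^m) f)"
    by (simp only: power_Suc pact_mult minus_zero)
  then show ?case by (simp only: Suc pact_lin) simp
qed

lemma pact_dvd: "P dvd Q \<Longrightarrow> pact P f = 0 \<Longrightarrow> pact Q f = 0"
  by (auto simp: dvd_def pact_mult mult.commute[of P])

lemma E_lin: "E (\<lambda>n. f (Suc n) - c * f n) = fps_deriv (E f) - fps_const c * E f"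
proof -
  have "(\<lambda>n. f (Suc n) - c * f n) = (\<lambda>n. f (Suc n)) - (\<lambda>n. c * f n)" by (simp add: fun_eq_iff)
  then show ?thesis by (simp add: E_diff E_sh E_scal)
qed

lemma leibniz: "pact [:-(a+b),1:] (conv f g) = conv (pact [:-a,1:] f) g + conv f (pact [:-b,1:] g)"
  apply (rule E_inj)
  apply (simp only: pact_lin E_lin E_conv E_add fps_deriv_mult fps_const_add[symmetric])
  apply (simp add: algebra_simps del: fps_const_add)
  done

definition GE :: "complex \<Rightarrow> dual set" where
  "GE c = {f. \<exists>m. pact ([:-c,1:]^m) f = 0}"

lemma conv_GE_pow:
  "a + b \<le> n \<Longrightarrow> pact ([:-c,1:]^a) f = 0 \<Longrightarrow> pact ([:-d,1:]^b) g = 0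
   \<Longrightarrow> pact ([:-(c+d),1:]^n) (conv f g) = 0"
proof (induction n arbitrary: a b f g)
  case 0
  then show ?case by simp
next
  case (Suc k)
  show ?case
  proof (cases "a = 0 \<or> b = 0")
    case True
    with Suc.prems show ?thesis by auto
  next
    case False
    then obtain a' b' where ab: "a = Suc a'" "b = Suc b'" by (meson not0_implies_Suc)
    have 1: "pact ([:-c,1:]^a') (pact [:-c,1:] f) = 0"
      using Suc.prems(2) by (simp only: ab power_Suc2 pact_mult)
    have 2: "pact ([:-d,1:]^b') (pact [:-d,1:] g) = 0"
      using Suc.prems(3) by (simp only: ab power_Suc2 pact_mult)
    have "pact ([:-(c+d),1:]^Suc k) (conv f g) = pact ([:-(c+d),1:]^k) (pact [:-(c+d),1:] (conv f g))"
      by (simp only: power_Suc2 pact_mult)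
    also have "\<dots> = pact ([:-(c+d),1:]^k) (conv (pact [:-c,1:] f) g) + pact ([:-(c+d),1:]^k) (conv f (pact [:-d,1:] g))"
      by (simp only: leibniz pact_add_fun)
    also have "\<dots> = 0"
      using Suc.IH[OF _ 1 Suc.prems(3)] Suc.IH[OF _ Suc.prems(2) 2] Suc.prems(1) ab by simp
    finally show ?thesis .
  qed
qed





section \<open>Linearly recursive sequences\<close>

lemma dual_app_pact: "dual_app f q = pact q f 0"
  by (simp add: dual_app_def pact_def)

lemma linrec_iff: "f \<in> linrec \<longleftrightarrow> (\<exists>P. P \<noteq> 0 \<and> pact P f = 0)"
proof
  assume "f \<in> linrec"
  then obtain K where K: "poly_ideal K" "K \<noteq> {0}" "\<forall>q\<in>K. dual_app f q = 0"
    by (auto simp: linrec_def)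
  from K(1) have "0 \<in> K" by (simp add: poly_ideal_def)
  with K(2) obtain P where P: "P \<in> K" "P \<noteq> 0" by blast
  have "pact P f n = 0" for n
  proof -
    have "[:0,1:]^n * P \<in> K" using K(1) P(1) by (simp add: poly_ideal_def)
    then have "pact ([:0,1:]^n * P) f 0 = 0" using K(3) by (simp add: dual_app_pact)
    then show ?thesis by (simp only: pact_mult pact_Xpow) simp
  qed
  then show "\<exists>P. P \<noteq> 0 \<and> pact P f = 0" using P(2) by (auto simp: fun_eq_iff)
next
  assume "\<exists>P. P \<noteq> 0 \<and> pact P f = 0"
  then obtain P where P: "P \<noteq> 0" "pact P f = 0" by blast
  let ?K = "{q * P | q. True}"
  have "poly_ideal ?K"
    unfolding poly_ideal_def
  proof (intro conjI ballI allI)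
    show "0 \<in> ?K" by (rule CollectI, rule exI[of _ 0]) simp
    fix a b assume "a \<in> ?K" "b \<in> ?K"
    then obtain qa qb where "a = qa * P" "b = qb * P" by blast
    then show "a + b \<in> ?K" by (auto intro!: exI[of _ "qa + qb"] simp: distrib_right)
  next
    fix a q assume "a \<in> ?K"
    then obtain qa where "a = qa * P" by blast
    then show "q * a \<in> ?K" by (auto intro!: exI[of _ "q * qa"] simp: mult.assoc)
  qed
  moreover have "?K \<noteq> {0}" using P(1) by (auto intro!: exI[of _ 1])
  moreover have "\<forall>q\<in>?K. dual_app f q = 0"
    using P(2) by (auto simp: dual_app_pact pact_mult)
  ultimately show "f \<in> linrec" unfolding linrec_def by blast
qed

lemma X_pow_nz: "([:0,1:]::complex poly)^M \<noteq> 0" by simp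
lemma T_pow_nz: "([:-c,1:]::complex poly)^M \<noteq> 0" by simp

lemma linrec_fs: "(\<forall>k\<ge>M. f k = 0) \<Longrightarrow> f \<in> linrec"
  unfolding linrec_iff
  by (rule exI[of _ "[:0,1:]^M"]) (simp add: pact_Xpow fun_eq_iff)

lemma GE_linrec: "f \<in> GE c \<Longrightarrow> f \<in> linrec"
  unfolding linrec_iff GE_def using T_pow_nz by blast

lemma linrec_add: "f \<in> linrec \<Longrightarrow> g \<in> linrec \<Longrightarrow> f + g \<in> linrec"
proof -
  assume "f \<in> linrec" "g \<in> linrec"
  then obtain P Q where "P \<noteq> 0" "pact P f = 0" "Q \<noteq> 0" "pact Q g = 0" by (auto simp: linrec_iff)
  then show ?thesis unfolding linrec_iff
  proof (intro exI[of _ "P*Q"] conjI)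
    show "P * Q \<noteq> 0" using \<open>P \<noteq> 0\<close> \<open>Q \<noteq> 0\<close> by simp
    have "pact (P*Q) f = 0" using \<open>pact P f = 0\<close> by (simp add: mult.commute[of P Q] pact_mult)
    moreover have "pact (P*Q) g = 0" using \<open>pact Q g = 0\<close> by (simp add: pact_mult)
    ultimately show "pact (P*Q) (f + g) = 0" by (simp add: pact_add_fun)
  qed
qed

lemma linrec_scal: "f \<in> linrec \<Longrightarrow> (\<lambda>n. c * f n) \<in> linrec"
  unfolding linrec_iff by (auto simp: pact_scal_fun)

lemma linrec_zero: "0 \<in> linrec"
  unfolding linrec_iff by (auto intro!: exI[of _ 1])

lemma neg_fun: "- (f::dual) = (\<lambda>n. (-1) * f n)" by (simp add: fun_eq_iff)

lemma linrec_neg: "f \<in> linrec \<Longrightarrow> - f \<in> linrec"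
  unfolding neg_fun by (rule linrec_scal)

lemma linrec_diff: "f \<in> linrec \<Longrightarrow> g \<in> linrec \<Longrightarrow> f - g \<in> linrec"
  using linrec_add[of f "- g"] linrec_neg[of g] by simp

lemma linrec_sum: "finite A \<Longrightarrow> (\<forall>i\<in>A. g i \<in> linrec) \<Longrightarrow> (\<Sum>i\<in>A. g i) \<in> linrec"
  by (induction A rule: finite_induct) (auto simp: linrec_zero linrec_add)

lemma linrec_factor:
  assumes "f \<in> linrec"
  shows "\<exists>F N. finite F \<and> pact (\<Prod>c\<in>F. [:-c,1:]^N) f = 0"
proof -
  obtain P where P: "P \<noteq> 0" "pact P f = 0" using assms by (auto simp: linrec_iff)
  define F where "F = {x. poly P x = 0}"
  have fin: "finite F" unfolding F_def using P(1) by (rule poly_roots_finite)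
  define q where "q = (\<Prod>c\<in>F. [:-c,1:])"
  have "\<forall>x. poly P x = 0 \<longrightarrow> poly q x = 0"
    unfolding q_def using fin by (auto simp: poly_prod F_def prod_zero_iff)
  then have "P dvd q ^ degree P" using P(1) nullstellensatz_univariate by blast
  also have "q ^ degree P = (\<Prod>c\<in>F. [:-c,1:]^degree P)"
    unfolding q_def by (rule prod_power_distrib)
  finally show ?thesis using fin pact_dvd P(2) by blast
qed

lemma ring_aux: "((u::'a::comm_ring) * A + v * B) * (u1 * T + v1 * B) = (u * u1) * (A * T) + (u * A * v1 + v * u1 * T + v * v1 * B) * B"
  by (simp add: algebra_simps)

lemma ring_aux2: "(T::'a::comm_ring) * S + bb = B \<Longrightarrow> (- k * S) * T + k * B = k * bb"
  by (auto simp: algebra_simps)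

lemma bezout_lin:
  assumes "poly B c \<noteq> 0"
  shows "\<exists>u v. u * [:-c,1:]^m + v * B = (1::complex poly)"
proof (induction m)
  case 0
  show ?case by (rule exI[of _ 1], rule exI[of _ 0]) simp
next
  case (Suc m)
  then obtain u v where uv: "u * [:-c,1:]^m + v * B = 1" by blast
  define b where "b = poly B c"
  define S where "S = synthetic_div B c"
  have BS: "[:-c,1:] * S + [:b:] = B" unfolding S_def b_def by (rule synthetic_div_correct')
  define u1 where "u1 = - [:1/b:] * S"
  define v1 where "v1 = [:1/b:]"
  have "u1 * [:-c,1:] + v1 * B = [:1/b:] * [:b:]"
    unfolding u1_def v1_def using BS by (rule ring_aux2)
  also have "[:1/b:] * [:b:] = 1" using assms by (simp add: b_def)
  finally have e1: "u1 * [:-c,1:] + v1 * B = 1" .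
  have "(u * [:-c,1:]^m + v * B) * (u1 * [:-c,1:] + v1 * B) = 1" by (simp only: uv e1) simp
  then have "(u*u1) * ([:-c,1:]^m * [:-c,1:]) + (u * [:-c,1:]^m * v1 + v * u1 * [:-c,1:] + v * v1 * B) * B = 1"
    by (simp only: ring_aux)
  then have "(u*u1) * [:-c,1:]^Suc m + (u * [:-c,1:]^m * v1 + v * u1 * [:-c,1:] + v * v1 * B) * B = 1"
    by (simp only: power_Suc2)
  then show ?case by (intro exI[of _ "u * u1"] exI[of _ "u * [:-c,1:]^m * v1 + v * u1 * [:-c,1:] + v * v1 * B"])
qed

lemma poly_prod_other_nz:
  assumes "finite F" "(c::complex) \<notin> F"
  shows "poly (\<Prod>d\<in>F. [:-d,1:]^N) c \<noteq> 0"
proof -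
  have nz: "poly ([:-d,1:]^N) c \<noteq> 0" if "d \<in> F" for d
  proof -
    have "c \<noteq> d" using assms(2) that by auto
    then have "c - d \<noteq> 0" by simp
    moreover have "poly [:-d,1:] c = c - d" by (simp add: algebra_simps)
    ultimately show ?thesis by (metis poly_power power_not_zero)
  qed
  have "poly (\<Prod>d\<in>F. [:-d,1:]^N) c = (\<Prod>d\<in>F. poly ([:-d,1:]^N) c)" by (rule poly_prod)
  also have "\<dots> \<noteq> 0" using nz assms(1) by (simp only: prod_zero_iff) blast
  finally show ?thesis .
qed

lemma pact_pow_mono: "pact ([:-c,1:]^a) f = 0 \<Longrightarrow> a \<le> b \<Longrightarrow> pact ([:-c,1:]^b) f = 0"
proof -
  assume "pact ([:-c,1:]^a) f = 0" "a \<le> b"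
  moreover have "[:-c,1:]^b = [:-c,1:]^(b-a) * [:-c,1:]^a"
    using \<open>a \<le> b\<close> by (simp add: power_add[symmetric])
  ultimately show ?thesis by (simp add: pact_mult)
qed

lemma GE_zero: "0 \<in> GE c" by (auto simp: GE_def)
lemma GE_add: "f \<in> GE c \<Longrightarrow> g \<in> GE c \<Longrightarrow> f + g \<in> GE c"
proof -
  assume "f \<in> GE c" "g \<in> GE c"
  then obtain a b where "pact ([:-c,1:]^a) f = 0" "pact ([:-c,1:]^b) g = 0" by (auto simp: GE_def)
  then have "pact ([:-c,1:]^(a+b)) f = 0" "pact ([:-c,1:]^(a+b)) g = 0"
    using pact_pow_mono[of c a f "a+b"] pact_pow_mono[of c b g "a+b"] by auto
  then show ?thesis by (auto simp: GE_def pact_add_fun intro!: exI[of _ "a+b"])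
qed
lemma GE_scal: "f \<in> GE c \<Longrightarrow> (\<lambda>n. k * f n) \<in> GE c"
proof -
  assume "f \<in> GE c"
  then obtain m where "pact ([:-c,1:]^m) f = 0" by (auto simp: GE_def)
  then show ?thesis by (auto simp: GE_def pact_scal_fun intro!: exI[of _ m])
qed
lemma GE_neg: "f \<in> GE c \<Longrightarrow> - f \<in> GE c"
  unfolding neg_fun by (rule GE_scal)
lemma GE_diff: "f \<in> GE c \<Longrightarrow> g \<in> GE c \<Longrightarrow> f - g \<in> GE c"
  using GE_add[of f c "- g"] GE_neg[of g c] by simp

lemma decomp_exists:
  "finite F \<Longrightarrow> pact (\<Prod>c\<in>F. [:-c,1:]^N) f = 0 \<Longrightarrow> \<exists>g. (\<forall>c\<in>F. g c \<in> GE c) \<and> f = (\<Sum>c\<in>F. g c)"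
proof (induction F arbitrary: f rule: finite_induct)
  case empty
  then show ?case by simp
next
  case (insert c F)
  define A where "A = ([:-c,1:]^N :: complex poly)"
  define B where "B = (\<Prod>d\<in>F. [:-d,1:]^N :: complex poly)"
  have P: "pact (A * B) f = 0" using insert by (simp add: A_def B_def)
  have "poly B c \<noteq> 0" unfolding B_def using insert(1,2) by (rule poly_prod_other_nz)
  then obtain u v where uv: "u * A + v * B = 1" unfolding A_def using bezout_lin by blast
  define f1 where "f1 = pact (v * B) f"
  define f2 where "f2 = pact (u * A) f"
  have "pact A f1 = pact v (pact (A * B) f)" unfolding f1_def
    by (simp only: pact_mult[symmetric] mult.commute mult.left_commute)
  then have f1: "f1 \<in> GE c" using P unfolding GE_def A_def by auto
  have "pact B f2 = pact u (pact (A * B) f)" unfolding f2_def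
    by (simp only: pact_mult[symmetric] mult.commute mult.left_commute)
  then have "pact B f2 = 0" using P by simp
  then obtain g where g: "\<forall>d\<in>F. g d \<in> GE d" "f2 = (\<Sum>d\<in>F. g d)"
    using insert.IH unfolding B_def by blast
  have f: "f = f1 + f2"
  proof -
    have "f = pact (u * A + v * B) f" by (simp add: uv)
    also have "\<dots> = f1 + f2" by (simp add: pact_add_poly f1_def f2_def add.commute)
    finally show ?thesis .
  qed
  have "(\<Sum>d\<in>F. (g(c := f1)) d) = (\<Sum>d\<in>F. g d)"
    using insert(2) by (intro sum.cong) auto
  then have "f = (\<Sum>d\<in>insert c F. (g(c := f1)) d)"
    using insert(1,2) f g(2) by simp
  moreover have "\<forall>d\<in>insert c F. (g(c := f1)) d \<in> GE d" using g(1) f1 by auto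
  ultimately show ?case by (intro exI[of _ "g(c := f1)"] conjI)
qed

definition rep :: "dual \<Rightarrow> complex set \<Rightarrow> (complex \<Rightarrow> dual) \<Rightarrow> bool" where
  "rep f F g \<longleftrightarrow> finite F \<and> (\<forall>c\<in>F. g c \<in> GE c) \<and> f = (\<Sum>c\<in>F. g c)"

lemma linrec_rep: "f \<in> linrec \<Longrightarrow> \<exists>F g. rep f F g"
proof -
  assume "f \<in> linrec"
  then obtain F N where "finite F" "pact (\<Prod>c\<in>F. [:-c,1:]^N) f = 0" using linrec_factor by blast
  moreover from decomp_exists[OF this] obtain g where "(\<forall>c\<in>F. g c \<in> GE c) \<and> f = (\<Sum>c\<in>F. g c)" by blast
  ultimately show ?thesis unfolding rep_def by blast
qed

lemma decomp_unique:
  assumes fin: "finite F" and ge: "\<forall>d\<in>F. g d \<in> GE d" and s: "(\<Sum>d\<in>F. g d) = 0" and c: "c \<in> F"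
  shows "g c = 0"
proof -
  from ge have "\<forall>d\<in>F. \<exists>m. pact ([:-d,1:]^m) (g d) = 0" unfolding GE_def by blast
  then have "\<exists>m. \<forall>d\<in>F. pact ([:-d,1:]^(m d)) (g d) = 0" by (rule bchoice)
  then obtain m where m: "\<forall>d\<in>F. pact ([:-d,1:]^(m d)) (g d) = 0" by (elim exE)
  define M where "M = (\<Sum>d\<in>F. m d)"
  have mM: "\<forall>d\<in>F. pact ([:-d,1:]^M) (g d) = 0"
  proof
    fix d assume d: "d \<in> F"
    have "m d \<le> M" unfolding M_def using fin d by (intro member_le_sum) auto
    with m d show "pact ([:-d,1:]^M) (g d) = 0" using pact_pow_mono by blast
  qed
  define B where "B = (\<Prod>d\<in>F-{c}. [:-d,1:]^M :: complex poly)"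
  have Bk: "pact B (g d) = 0" if "d \<in> F - {c}" for d
  proof -
    have "B = (\<Prod>e\<in>F-{c}-{d}. [:-e,1:]^M) * [:-d,1:]^M"
      unfolding B_def using that fin by (simp add: prod.remove mult.commute)
    then have "pact B (g d) = pact (\<Prod>e\<in>F-{c}-{d}. [:-e,1:]^M) (pact ([:-d,1:]^M) (g d))"
      by (simp only: pact_mult)
    then show ?thesis using mM that by simp
  qed
  have "pact B (\<Sum>d\<in>F. g d) = (\<Sum>d\<in>F. pact B (g d))" using fin by (rule pact_sum_fun)
  also have "\<dots> = pact B (g c) + (\<Sum>d\<in>F-{c}. pact B (g d))" using fin c by (simp add: sum.remove)
  also have "(\<Sum>d\<in>F-{c}. pact B (g d)) = 0" using Bk by simp
  finally have gB: "pact B (g c) = 0" using s by simp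
  have "poly B c \<noteq> 0" unfolding B_def using fin by (intro poly_prod_other_nz) auto
  then obtain u v where uv: "u * [:-c,1:]^M + v * B = 1" using bezout_lin by blast
  have "g c = pact (u * [:-c,1:]^M + v * B) (g c)" by (simp add: uv)
  also have "\<dots> = 0" using gB mM c by (simp add: pact_add_poly pact_mult)
  finally show ?thesis .
qed




definition D :: "dual \<Rightarrow> complex" where
  "D f = (SOME v. \<exists>F g. rep f F g \<and> v = (\<Sum>c\<in>F. c * g c 0))"

lemma rep_extend:
  assumes "rep f F g" "F \<subseteq> H" "finite H"
  shows "rep f H (\<lambda>c. if c \<in> F then g c else 0)"
proof -
  have "(\<Sum>c\<in>H. (if c \<in> F then g c else 0)) = (\<Sum>c\<in>H \<inter> F. g c)"
    using assms(3) by (simp add: sum.inter_restrict)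
  also have "H \<inter> F = F" using assms(2) by blast
  finally show ?thesis using assms unfolding rep_def by (auto simp: GE_zero)
qed

lemma rep_val_extend:
  fixes g :: "complex \<Rightarrow> dual"
  assumes "F \<subseteq> H" "finite H"
  shows "(\<Sum>c\<in>H. c * (if c \<in> F then g c else 0) 0) = (\<Sum>c\<in>F. c * g c 0)"
proof -
  have "(\<Sum>c\<in>H. c * (if c \<in> F then g c else 0) 0) = (\<Sum>c\<in>H. if c \<in> F then c * g c 0 else 0)"
    by (rule sum.cong) auto
  also have "\<dots> = (\<Sum>c\<in>H \<inter> F. c * g c 0)"
    using assms(2) by (simp add: sum.inter_restrict)
  also have "H \<inter> F = F" using assms(1) by blast
  finally show ?thesis .
qed

lemma rep_unique_val:
  assumes r: "rep f F g" and r': "rep f F' g'"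
  shows "(\<Sum>c\<in>F. c * g c 0) = (\<Sum>c\<in>F'. c * g' c 0)"
proof -
  define H where "H = F \<union> F'"
  define e where "e = (\<lambda>c. if c \<in> F then g c else 0)"
  define e' where "e' = (\<lambda>c. if c \<in> F' then g' c else 0)"
  have finFF: "finite F" "finite F'" using r r' by (auto simp: rep_def)
  have fin: "finite H" using finFF by (simp add: H_def)
  have r1: "rep f H e" unfolding e_def by (rule rep_extend[OF r _ fin]) (auto simp: H_def)
  have r2: "rep f H e'" unfolding e'_def by (rule rep_extend[OF r' _ fin]) (auto simp: H_def)
  have f1: "f = (\<Sum>c\<in>H. e c)" using r1 unfolding rep_def by blast
  have f2: "f = (\<Sum>c\<in>H. e' c)" using r2 unfolding rep_def by blast
  have ge_d: "\<forall>d\<in>H. e d - e' d \<in> GE d" using r1 r2 unfolding rep_def by (auto intro: GE_diff)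
  have "(\<Sum>d\<in>H. e d - e' d) = (\<Sum>d\<in>H. e d) - (\<Sum>d\<in>H. e' d)" by (rule sum_subtractf)
  also have "\<dots> = f - f" by (simp only: f1[symmetric] f2[symmetric])
  finally have s_d: "(\<Sum>d\<in>H. e d - e' d) = 0" by simp
  have eq: "e c = e' c" if c: "c \<in> H" for c
  proof -
    have "e c - e' c = 0" by (rule decomp_unique[OF fin ge_d s_d c])
    then show ?thesis by simp
  qed
  have "(\<Sum>c\<in>F. c * g c 0) = (\<Sum>c\<in>H. c * e c 0)"
    unfolding e_def by (rule rep_val_extend[symmetric]) (auto simp: H_def finFF)
  also have "\<dots> = (\<Sum>c\<in>H. c * e' c 0)" using eq by simp
  also have "\<dots> = (\<Sum>c\<in>F'. c * g' c 0)"
    unfolding e'_def by (rule rep_val_extend) (auto simp: H_def finFF)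
  finally show ?thesis .
qed

lemma D_rep: "rep f F g \<Longrightarrow> D f = (\<Sum>c\<in>F. c * g c 0)"
proof -
  assume r: "rep f F g"
  have ex: "\<exists>v. \<exists>F g. rep f F g \<and> v = (\<Sum>c\<in>F. c * g c 0)" using r by blast
  have "\<exists>F' g'. rep f F' g' \<and> D f = (\<Sum>c\<in>F'. c * g' c 0)"
    unfolding D_def by (rule someI_ex[OF ex])
  then obtain F' g' where "rep f F' g'" "D f = (\<Sum>c\<in>F'. c * g' c 0)" by blast
  then show ?thesis using rep_unique_val[OF r] by simp
qed

lemma D_GE: "f \<in> GE c \<Longrightarrow> D f = c * f 0"
proof -
  assume "f \<in> GE c"
  then have "rep f {c} (\<lambda>_. f)" by (simp add: rep_def)
  then show ?thesis by (simp add: D_rep)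
qed

lemma D_zero: "D 0 = 0"
proof -
  have "rep 0 {} (\<lambda>_. 0)" by (simp add: rep_def)
  then show ?thesis by (simp add: D_rep)
qed

lemma D_add:
  assumes "f \<in> linrec" "g \<in> linrec"
  shows "D (f + g) = D f + D g"
proof -
  obtain F a where ra: "rep f F a" using linrec_rep[OF assms(1)] by blast
  obtain G b where rb: "rep g G b" using linrec_rep[OF assms(2)] by blast
  define H where "H = F \<union> G"
  have fin: "finite H" using ra rb by (auto simp: rep_def H_def)
  define ea where "ea = (\<lambda>c. if c \<in> F then a c else 0)"
  define eb where "eb = (\<lambda>c. if c \<in> G then b c else 0)"
  have r1: "rep f H ea" unfolding ea_def by (rule rep_extend[OF ra _ fin]) (auto simp: H_def)
  have r2: "rep g H eb" unfolding eb_def by (rule rep_extend[OF rb _ fin]) (auto simp: H_def)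
  have "rep (f + g) H (\<lambda>c. ea c + eb c)"
    using r1 r2 unfolding rep_def by (auto intro: GE_add simp: sum.distrib)
  then have "D (f + g) = (\<Sum>c\<in>H. c * (ea c + eb c) 0)" by (rule D_rep)
  also have "\<dots> = (\<Sum>c\<in>H. c * ea c 0) + (\<Sum>c\<in>H. c * eb c 0)"
    by (simp add: distrib_left sum.distrib)
  also have "\<dots> = D f + D g" using D_rep[OF r1] D_rep[OF r2] by simp
  finally show ?thesis .
qed

lemma D_sum: "finite A \<Longrightarrow> (\<forall>i\<in>A. h i \<in> linrec) \<Longrightarrow> D (\<Sum>i\<in>A. h i) = (\<Sum>i\<in>A. D (h i))"
proof (induction A rule: finite_induct)
  case empty
  then show ?case by (simp add: D_zero)
next
  case (insert x A)
  then have "D (\<Sum>i\<in>insert x A. h i) = D (h x + (\<Sum>i\<in>A. h i))" by simp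
  also have "\<dots> = D (h x) + D (\<Sum>i\<in>A. h i)"
    using insert by (intro D_add) (auto intro: linrec_sum)
  also have "\<dots> = D (h x) + (\<Sum>i\<in>A. D (h i))" using insert by simp
  finally show ?case using insert.hyps by (simp only: sum.insert not_False_eq_True)
qed

lemma GE_conv: "f \<in> GE c \<Longrightarrow> g \<in> GE d \<Longrightarrow> conv f g \<in> GE (c + d)"
proof -
  assume "f \<in> GE c" "g \<in> GE d"
  then obtain a b where "pact ([:-c,1:]^a) f = 0" "pact ([:-d,1:]^b) g = 0" by (auto simp: GE_def)
  then have "pact ([:-(c+d),1:]^(a+b)) (conv f g) = 0" by (intro conv_GE_pow[of a b]) auto
  then show ?thesis unfolding GE_def by blast
qed

lemma conv_rep: "rep f F a \<Longrightarrow> rep g G b \<Longrightarrow> conv f g = (\<Sum>c\<in>F. \<Sum>d\<in>G. conv (a c) (b d))"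
proof -
  assume "rep f F a" "rep g G b"
  then have F: "finite F" "f = (\<Sum>c\<in>F. a c)" and G: "finite G" "g = (\<Sum>d\<in>G. b d)" by (auto simp: rep_def)
  have "conv f g = (\<Sum>c\<in>F. conv (a c) g)" unfolding F(2) using F(1) by (rule conv_sum_left)
  also have "\<dots> = (\<Sum>c\<in>F. \<Sum>d\<in>G. conv (a c) (b d))" unfolding G(2) using G(1) by (simp add: conv_sum_right)
  finally show ?thesis .
qed

lemma rep_term: "rep f F a \<Longrightarrow> rep g G b \<Longrightarrow> c \<in> F \<Longrightarrow> d \<in> G \<Longrightarrow> conv (a c) (b d) \<in> linrec"
proof -
  assume "rep f F a" "rep g G b" "c \<in> F" "d \<in> G"
  then have "a c \<in> GE c" "b d \<in> GE d" by (auto simp: rep_def)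
  then show ?thesis by (rule GE_linrec[OF GE_conv])
qed

lemma rep_inner: "rep f F a \<Longrightarrow> rep g G b \<Longrightarrow> c \<in> F \<Longrightarrow> (\<Sum>d\<in>G. conv (a c) (b d)) \<in> linrec"
proof -
  assume r: "rep f F a" "rep g G b" "c \<in> F"
  then have "finite G" by (simp add: rep_def)
  then show ?thesis using rep_term[OF r(1,2,3)] by (intro linrec_sum) auto
qed

lemma rep_outer: "rep f F a \<Longrightarrow> rep g G b \<Longrightarrow> (\<Sum>c\<in>F. \<Sum>d\<in>G. conv (a c) (b d)) \<in> linrec"
proof -
  assume r: "rep f F a" "rep g G b"
  then have "finite F" by (simp add: rep_def)
  then show ?thesis using rep_inner[OF r(1,2)] by (intro linrec_sum) auto
qed

lemma linrec_conv:
  assumes "f \<in> linrec" "g \<in> linrec"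
  shows "conv f g \<in> linrec"
proof -
  obtain F a where ra: "rep f F a" using linrec_rep[OF assms(1)] by blast
  obtain G b where rb: "rep g G b" using linrec_rep[OF assms(2)] by blast
  have "(\<Sum>c\<in>F. \<Sum>d\<in>G. conv (a c) (b d)) \<in> linrec"
    using ra rb by (rule rep_outer)
  then show ?thesis using conv_rep[OF ra rb] by simp
qed

lemma D_conv:
  assumes "f \<in> linrec" "g \<in> linrec"
  shows "D (conv f g) = D f * g 0 + f 0 * D g"
proof -
  obtain F a where ra: "rep f F a" using linrec_rep[OF assms(1)] by blast
  obtain G b where rb: "rep g G b" using linrec_rep[OF assms(2)] by blast
  have finF: "finite F" and finG: "finite G" using ra rb by (auto simp: rep_def)
  have geF: "\<forall>c\<in>F. a c \<in> GE c" and geG: "\<forall>d\<in>G. b d \<in> GE d" using ra rb by (auto simp: rep_def)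
  have "D (conv f g) = D (\<Sum>c\<in>F. \<Sum>d\<in>G. conv (a c) (b d))" using conv_rep[OF ra rb] by simp
  also have "\<dots> = (\<Sum>c\<in>F. D (\<Sum>d\<in>G. conv (a c) (b d)))"
    using finF rep_inner[OF ra rb] by (intro D_sum) auto
  also have "\<dots> = (\<Sum>c\<in>F. \<Sum>d\<in>G. D (conv (a c) (b d)))"
    using finG rep_term[OF ra rb] by (intro sum.cong refl D_sum) auto
  also have "\<dots> = (\<Sum>c\<in>F. \<Sum>d\<in>G. (c + d) * (a c 0 * b d 0))"
  proof (intro sum.cong refl)
    fix c d assume "c \<in> F" "d \<in> G"
    then have ge: "conv (a c) (b d) \<in> GE (c + d)" using geF geG by (simp add: GE_conv)
    show "D (conv (a c) (b d)) = (c + d) * (a c 0 * b d 0)" by (simp add: D_GE[OF ge] conv_0)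
  qed
  also have "\<dots> = (\<Sum>c\<in>F. \<Sum>d\<in>G. c * a c 0 * b d 0 + a c 0 * (d * b d 0))"
    by (intro sum.cong refl) (simp add: algebra_simps)
  also have "\<dots> = (\<Sum>c\<in>F. \<Sum>d\<in>G. c * a c 0 * b d 0) + (\<Sum>c\<in>F. \<Sum>d\<in>G. a c 0 * (d * b d 0))"
    by (simp add: sum.distrib)
  also have "\<dots> = (\<Sum>c\<in>F. c * a c 0) * (\<Sum>d\<in>G. b d 0) + (\<Sum>c\<in>F. a c 0) * (\<Sum>d\<in>G. d * b d 0)"
    by (simp only: sum_product)
  also have "\<dots> = D f * g 0 + f 0 * D g"
    using D_rep[OF ra] D_rep[OF rb] ra rb unfolding rep_def by (simp add: sum_fun_apply)
  finally show ?thesis .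
qed

lemma eps_linrec: "eps \<in> linrec"
  by (rule linrec_fs[of 1]) (simp add: eps_def)

lemma D_J2:
  assumes "c \<in> linrec" "p \<in> augJ" "q \<in> augJ"
  shows "D (conv c (conv p q)) = 0"
proof -
  have p: "p \<in> linrec" "p 0 = 0" and q: "q \<in> linrec" "q 0 = 0"
    using assms by (auto simp: augJ_def augI_def)
  have "D (conv p q) = 0" using D_conv[OF p(1) q(1)] p q by simp
  then show ?thesis using D_conv[OF assms(1) linrec_conv[OF p(1) q(1)]] p q by (simp add: conv_0)
qed

lemma prods_linrec: "K \<subseteq> linrec \<Longrightarrow> p \<in> prods K n \<Longrightarrow> p \<in> linrec"
  by (induction n arbitrary: p) (auto simp: eps_linrec intro!: linrec_conv)

lemma augJ_linrec: "augJ \<subseteq> linrec" by (auto simp: augJ_def)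

lemma Jpow_linrec: "x \<in> Jpow n \<Longrightarrow> x \<in> linrec"
  unfolding Jpow_def ideal_pow_def
  using prods_linrec[OF augJ_linrec] by (auto intro!: linrec_sum linrec_conv)

lemma D_Jpow2: "x \<in> Jpow 2 \<Longrightarrow> D x = 0"
proof -
  assume "x \<in> Jpow 2"
  then obtain F a p where F: "finite (F::nat set)" "\<forall>i\<in>F. a i \<in> linrec \<and> p i \<in> prods augJ 2"
    and x: "x = (\<Sum>i\<in>F. conv (a i) (p i))"
    unfolding Jpow_def ideal_pow_def mem_Collect_eq by (elim exE conjE) (rule that)
  have pl: "p i \<in> linrec" if "i \<in> F" for i using F(2) that prods_linrec[OF augJ_linrec] by blast
  have "D x = (\<Sum>i\<in>F. D (conv (a i) (p i)))"
    unfolding x using F pl by (intro D_sum) (auto intro: linrec_conv)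
  also have "\<dots> = 0"
  proof (rule sum.neutral, rule ballI)
    fix i assume i: "i \<in> F"
    then have "p i \<in> prods augJ (Suc (Suc 0))" using F(2) by (simp add: numeral_2_eq_2)
    then obtain p1 q where "p1 \<in> augJ" "q \<in> augJ" "p i = conv p1 (conv q eps)" by auto
    then show "D (conv (a i) (p i)) = 0" using D_J2 F(2) i by auto
  qed
  finally show ?thesis .
qed

definition w :: "nat \<Rightarrow> dual" where
  "w N = (\<lambda>m. if m \<le> N then 0 else 1)"

lemma phi1_GE: "phi1 \<in> GE 1"
  unfolding GE_def by (rule CollectI, rule exI[of _ 1]) (simp add: pact_lin phi1_def fun_eq_iff)

lemma ind_GE: "(\<lambda>m. if m \<le> N then -1 else 0) \<in> GE 0"
  unfolding GE_def by (rule CollectI, rule exI[of _ "Suc N"]) (simp only: minus_zero pact_Xpow, simp add: fun_eq_iff)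

lemma w_rep: "rep (w N) {1, 0} (\<lambda>c. if c = 1 then phi1 else (\<lambda>m. if m \<le> N then -1 else 0))"
  unfolding rep_def using phi1_GE ind_GE by (auto simp: w_def phi1_def fun_eq_iff)

lemma w_linrec: "w N \<in> linrec"
proof -
  have "w N = phi1 + (\<lambda>m. if m \<le> N then -1 else 0)" by (simp add: w_def phi1_def fun_eq_iff)
  then show ?thesis using linrec_add[OF GE_linrec[OF phi1_GE] GE_linrec[OF ind_GE]] by simp
qed

lemma D_w: "D (w N) = 1"
  using D_rep[OF w_rep[of N]] by (simp add: phi1_def)

lemma w_not_Jpow2: "w N \<notin> Jpow 2"
  using D_Jpow2 D_w by fastforce




section \<open>Vanishing and filtrations\<close>

lemma conv_vanish_right:
  assumes "\<forall>k<N. p k = 0" "k < N"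
  shows "conv c p k = 0"
  unfolding conv_def using assms by (intro sum.neutral) auto

lemma conv_vanish_step:
  assumes a: "a 0 = 0" and b: "\<forall>k<N. b k = 0" and k: "k < Suc N"
  shows "conv a b k = 0"
  unfolding conv_def
proof (intro sum.neutral ballI)
  fix j assume j: "j \<in> {..k}"
  show "of_nat (k choose j) * a j * b (k - j) = 0"
  proof (cases "j = 0")
    case True
    then show ?thesis using a by simp
  next
    case False
    then have "k - j < N" using j k by auto
    then show ?thesis using b by simp
  qed
qed

lemma prods_vanish: "K \<subseteq> augI \<Longrightarrow> p \<in> prods K n \<Longrightarrow> \<forall>k<n. p k = 0"
proof (induction n arbitrary: p)
  case 0
  then show ?case by simp
next
  case (Suc n)
  then obtain a b where ab: "a \<in> K" "b \<in> prods K n" "p = conv a b" by auto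
  have "a 0 = 0" using ab(1) Suc.prems(1) by (auto simp: augI_def)
  moreover have "\<forall>k<n. b k = 0" using Suc.IH[OF Suc.prems(1) ab(2)] .
  ultimately show ?case using ab(3) conv_vanish_step by blast
qed

lemma Ipow_vanish: "f \<in> Ipow N \<Longrightarrow> k < N \<Longrightarrow> f k = 0"
proof -
  assume f: "f \<in> Ipow N" and k: "k < N"
  then obtain F a p where F: "finite (F::nat set)" "\<forall>i\<in>F. a i \<in> UNIV \<and> p i \<in> prods augI N"
    and x: "f = (\<Sum>i\<in>F. conv (a i) (p i))"
    unfolding Ipow_def ideal_pow_def mem_Collect_eq by (elim exE conjE) (rule that)
  have "f k = (\<Sum>i\<in>F. conv (a i) (p i) k)" unfolding x by (rule sum_fun_apply)
  also have "\<dots> = 0"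
  proof (rule sum.neutral, rule ballI)
    fix i assume "i \<in> F"
    then have "\<forall>k<N. p i k = 0" using F(2) prods_vanish[of augI] by blast
    then show "conv (a i) (p i) k = 0" using k by (rule conv_vanish_right)
  qed
  finally show ?thesis .
qed

lemma E_xi: "E xi = fps_X"
  by (rule fps_ext) (simp add: xi_def fps_X_nth)

lemma E_cpow: "E (cpow f k) = E f ^ k"
  by (induction k) (simp_all add: E_eps E_conv)

lemma cpow_xi: "cpow xi k m = (if m = k then fact k else 0)"
proof -
  have "fps_nth (E (cpow xi k)) m = fps_nth (fps_X ^ k) m" by (simp only: E_cpow E_xi)
  then have "cpow xi k m / fact m = (if m = k then 1 else 0)" by simp
  then show ?thesis by (cases "m = k") auto
qed

definition Einv :: "complex fps \<Rightarrow> dual" where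
  "Einv G = (\<lambda>n. fact n * fps_nth G n)"

lemma E_Einv: "E (Einv G) = G"
  by (rule fps_ext) (simp add: Einv_def)

lemma vanish_factor:
  assumes "\<forall>k<N. f k = 0"
  shows "f = conv (Einv (fps_shift N (E f))) (cpow xi N)"
proof (rule E_inj)
  show "E f = E (conv (Einv (fps_shift N (E f))) (cpow xi N))"
  proof (simp only: E_conv E_Einv E_cpow E_xi, rule fps_ext)
    fix n
    show "fps_nth (E f) n = fps_nth (fps_shift N (E f) * fps_X ^ N) n"
      using assms by (cases "n < N") (auto simp: fps_X_power_mult_right_nth)
  qed
qed

lemma cpow_prods: "x \<in> K \<Longrightarrow> cpow x n \<in> prods K n"
  by (induction n) auto

lemma xi_augI: "xi \<in> augI" by (simp add: augI_def xi_def)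

lemma xi_linrec: "xi \<in> linrec"
  by (rule linrec_fs[of 2]) (simp add: xi_def)

lemma xi_augJ: "xi \<in> augJ" using xi_augI xi_linrec by (simp add: augJ_def)

lemma vanish_Ipow:
  assumes "\<forall>k<N. f k = 0"
  shows "f \<in> Ipow N"
proof -
  let ?g = "Einv (fps_shift N (E f))"
  have "f = (\<Sum>i\<in>{0::nat}. conv ((\<lambda>_. ?g) i) ((\<lambda>_. cpow xi N) i))"
    using vanish_factor[OF assms] by simp
  moreover have "\<forall>i\<in>{0::nat}. (\<lambda>_. ?g) i \<in> UNIV \<and> (\<lambda>_. cpow xi N) i \<in> prods augI N"
    using cpow_prods[OF xi_augI] by simp
  ultimately show ?thesis unfolding Ipow_def ideal_pow_def mem_Collect_eq
    by (intro exI[of _ "{0::nat}"] exI[of _ "\<lambda>_. ?g"] exI[of _ "\<lambda>_. cpow xi N"] conjI) simp_all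
qed

lemma Ipow_eq: "f \<in> Ipow N \<longleftrightarrow> (\<forall>k<N. f k = 0)"
  using Ipow_vanish vanish_Ipow by blast

lemma fs_Jpow:
  assumes "\<forall>k<N. f k = 0" "\<forall>k\<ge>M. f k = 0"
  shows "f \<in> Jpow N"
proof -
  let ?g = "Einv (fps_shift N (E f))"
  have "?g \<in> linrec"
    by (rule linrec_fs[of M]) (simp add: Einv_def assms(2))
  have "f = (\<Sum>i\<in>{0::nat}. conv ((\<lambda>_. ?g) i) ((\<lambda>_. cpow xi N) i))"
    using vanish_factor[OF assms(1)] by simp
  moreover have "\<forall>i\<in>{0::nat}. (\<lambda>_. ?g) i \<in> linrec \<and> (\<lambda>_. cpow xi N) i \<in> prods augJ N"
    using cpow_prods[OF xi_augJ] \<open>?g \<in> linrec\<close> by simp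
  ultimately show ?thesis unfolding Jpow_def ideal_pow_def mem_Collect_eq
    by (intro exI[of _ "{0::nat}"] exI[of _ "\<lambda>_. ?g"] exI[of _ "\<lambda>_. cpow xi N"] conjI) simp_all
qed

section \<open>Generic facts on ideal powers\<close>

lemma prods_mono: "K \<subseteq> K' \<Longrightarrow> prods K n \<subseteq> prods K' n"
  by (induction n) auto

lemma ideal_pow_mono:
  assumes "A \<subseteq> A'" "K \<subseteq> K'"
  shows "ideal_pow A K n \<subseteq> ideal_pow A' K' n"
proof
  fix x assume "x \<in> ideal_pow A K n"
  then obtain F a p where F: "finite (F::nat set)" "\<forall>i\<in>F. a i \<in> A \<and> p i \<in> prods K n"
    and x: "x = (\<Sum>i\<in>F. conv (a i) (p i))"
    unfolding ideal_pow_def mem_Collect_eq by (elim exE conjE) (rule that)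
  have "\<forall>i\<in>F. a i \<in> A' \<and> p i \<in> prods K' n" using F(2) assms prods_mono[OF assms(2)] by blast
  then show "x \<in> ideal_pow A' K' n" unfolding ideal_pow_def mem_Collect_eq
    using F(1) x by (intro exI[of _ F] exI[of _ a] exI[of _ p] conjI)
qed

lemma ideal_pow_0: "0 \<in> ideal_pow A K n"
  unfolding ideal_pow_def mem_Collect_eq
  by (intro exI[of _ "{}::nat set"] exI[of _ "\<lambda>_. 0"] exI[of _ "\<lambda>_. 0"] conjI) simp_all

lemma ideal_pow_add:
  assumes "x \<in> ideal_pow A K n" "y \<in> ideal_pow A K n"
  shows "x + y \<in> ideal_pow A K n"
proof -
  obtain F1 a1 p1 where F1: "finite (F1::nat set)" "\<forall>i\<in>F1. a1 i \<in> A \<and> p1 i \<in> prods K n"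
    and x: "x = (\<Sum>i\<in>F1. conv (a1 i) (p1 i))"
    using assms(1) unfolding ideal_pow_def mem_Collect_eq by (elim exE conjE) (rule that)
  obtain F2 a2 p2 where F2: "finite (F2::nat set)" "\<forall>i\<in>F2. a2 i \<in> A \<and> p2 i \<in> prods K n"
    and y: "y = (\<Sum>i\<in>F2. conv (a2 i) (p2 i))"
    using assms(2) unfolding ideal_pow_def mem_Collect_eq by (elim exE conjE) (rule that)
  define G1 where "G1 = (\<lambda>i. 2 * i) ` F1"
  define G2 where "G2 = (\<lambda>i. Suc (2 * i)) ` F2"
  define a where "a = (\<lambda>i::nat. if even i then a1 (i div 2) else a2 (i div 2))"
  define p where "p = (\<lambda>i::nat. if even i then p1 (i div 2) else p2 (i div 2))"
  have fin: "finite (G1 \<union> G2)" using F1(1) F2(1) by (simp add: G1_def G2_def)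
  have disj: "G1 \<inter> G2 = {}" unfolding G1_def G2_def by auto presburger
  have inj1: "inj_on (\<lambda>i::nat. 2 * i) F1" by (auto simp: inj_on_def)
  have inj2: "inj_on (\<lambda>i::nat. Suc (2 * i)) F2" by (auto simp: inj_on_def)
  have s1: "(\<Sum>i\<in>G1. conv (a i) (p i)) = x"
    unfolding G1_def x by (simp add: sum.reindex[OF inj1] a_def p_def)
  have s2: "(\<Sum>i\<in>G2. conv (a i) (p i)) = y"
    unfolding G2_def y by (simp add: sum.reindex[OF inj2] a_def p_def)
  have "(\<Sum>i\<in>G1 \<union> G2. conv (a i) (p i)) = x + y"
    using fin disj by (simp add: sum.union_disjoint s1 s2)
  moreover have "\<forall>i\<in>G1 \<union> G2. a i \<in> A \<and> p i \<in> prods K n"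
    using F1(2) F2(2) by (auto simp: G1_def G2_def a_def p_def)
  ultimately show ?thesis unfolding ideal_pow_def mem_Collect_eq
    using fin by (intro exI[of _ "G1 \<union> G2"] exI[of _ a] exI[of _ p] conjI) simp_all
qed

lemma ideal_pow_Suc:
  assumes cl: "\<forall>a\<in>A. \<forall>k\<in>K. conv a k \<in> A"
  shows "ideal_pow A K (Suc n) \<subseteq> ideal_pow A K n"
proof
  fix x assume "x \<in> ideal_pow A K (Suc n)"
  then obtain F a p where F: "finite (F::nat set)" "\<forall>i\<in>F. a i \<in> A \<and> p i \<in> prods K (Suc n)"
    and x: "x = (\<Sum>i\<in>F. conv (a i) (p i))"
    unfolding ideal_pow_def mem_Collect_eq by (elim exE conjE) (rule that)
  have "\<forall>i\<in>F. \<exists>kq. fst kq \<in> K \<and> snd kq \<in> prods K n \<and> p i = conv (fst kq) (snd kq)"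
    using F(2) by force
  then have "\<exists>kq. \<forall>i\<in>F. fst (kq i) \<in> K \<and> snd (kq i) \<in> prods K n \<and> p i = conv (fst (kq i)) (snd (kq i))"
    by (rule bchoice)
  then obtain kq where kq: "\<forall>i\<in>F. fst (kq i) \<in> K \<and> snd (kq i) \<in> prods K n \<and> p i = conv (fst (kq i)) (snd (kq i))"
    by (elim exE)
  define a' where "a' = (\<lambda>i. conv (a i) (fst (kq i)))"
  define p' where "p' = (\<lambda>i. snd (kq i))"
  have "x = (\<Sum>i\<in>F. conv (a' i) (p' i))"
    unfolding x a'_def p'_def using kq by (intro sum.cong refl) (simp add: conv_assoc)
  moreover have "\<forall>i\<in>F. a' i \<in> A \<and> p' i \<in> prods K n"
    using kq F(2) cl unfolding a'_def p'_def by blast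
  ultimately show "x \<in> ideal_pow A K n" unfolding ideal_pow_def mem_Collect_eq
    using F(1) by (intro exI[of _ F] exI[of _ a'] exI[of _ p'] conjI) simp_all
qed

lemma ideal_pow_anti:
  assumes cl: "\<forall>a\<in>A. \<forall>k\<in>K. conv a k \<in> A"
  shows "m \<le> n \<Longrightarrow> ideal_pow A K n \<subseteq> ideal_pow A K m"
proof (induction n)
  case 0
  then show ?case by simp
next
  case (Suc n)
  show ?case
  proof (cases "m = Suc n")
    case True
    then show ?thesis by simp
  next
    case False
    then have "m \<le> n" using Suc.prems by simp
    then show ?thesis using Suc.IH ideal_pow_Suc[OF cl, of n] by blast
  qed
qed

lemma Jpow_anti: "m \<le> n \<Longrightarrow> Jpow n \<subseteq> Jpow m"
  unfolding Jpow_def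
  by (rule ideal_pow_anti) (auto simp: augJ_def intro: linrec_conv)

lemma Ipow_anti: "m \<le> n \<Longrightarrow> Ipow n \<subseteq> Ipow m"
  by (auto simp: Ipow_eq)

lemma Jpow_Ipow: "Jpow n \<subseteq> Ipow n"
  unfolding Jpow_def Ipow_def by (rule ideal_pow_mono) (auto simp: augJ_def)

lemma Jpow_add: "x \<in> Jpow n \<Longrightarrow> y \<in> Jpow n \<Longrightarrow> x + y \<in> Jpow n"
  unfolding Jpow_def by (rule ideal_pow_add)

lemma Jpow_0: "0 \<in> Jpow n"
  unfolding Jpow_def by (rule ideal_pow_0)

section \<open>Topology\<close>

lemma adic_istop:
  fixes P :: "nat \<Rightarrow> dual set" and S :: "dual set"
  assumes anti: "\<And>m n. m \<le> n \<Longrightarrow> P n \<subseteq> P m"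
  shows "istopology (\<lambda>U. U \<subseteq> S \<and> (\<forall>x\<in>U. \<exists>n. \<forall>y\<in>P n. x + y \<in> U))"
  unfolding istopology_def
proof (rule conjI; intro allI impI)
  fix A B :: "dual set"
  assume hA: "A \<subseteq> S \<and> (\<forall>x\<in>A. \<exists>n. \<forall>y\<in>P n. x + y \<in> A)"
    and hB: "B \<subseteq> S \<and> (\<forall>x\<in>B. \<exists>n. \<forall>y\<in>P n. x + y \<in> B)"
  show "A \<inter> B \<subseteq> S \<and> (\<forall>x\<in>A \<inter> B. \<exists>n. \<forall>y\<in>P n. x + y \<in> A \<inter> B)"
  proof (intro conjI ballI)
    show "A \<inter> B \<subseteq> S" using hA by blast
    fix x assume x: "x \<in> A \<inter> B"
    obtain n1 where n1: "\<forall>y\<in>P n1. x + y \<in> A" using hA x by blast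
    obtain n2 where n2: "\<forall>y\<in>P n2. x + y \<in> B" using hB x by blast
    have "P (max n1 n2) \<subseteq> P n1" "P (max n1 n2) \<subseteq> P n2" by (rule anti, simp)+
    then have "\<forall>y\<in>P (max n1 n2). x + y \<in> A \<inter> B" using n1 n2 by blast
    then show "\<exists>n. \<forall>y\<in>P n. x + y \<in> A \<inter> B" by blast
  qed
next
  fix KK :: "dual set set"
  assume h: "\<forall>K\<in>KK. K \<subseteq> S \<and> (\<forall>x\<in>K. \<exists>n. \<forall>y\<in>P n. x + y \<in> K)"
  show "\<Union>KK \<subseteq> S \<and> (\<forall>x\<in>\<Union>KK. \<exists>n. \<forall>y\<in>P n. x + y \<in> \<Union>KK)"
  proof (intro conjI ballI)
    show "\<Union>KK \<subseteq> S" using h by blast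
    fix x assume "x \<in> \<Union>KK"
    then obtain K where K: "K \<in> KK" "x \<in> K" by blast
    then obtain n where "\<forall>y\<in>P n. x + y \<in> K" using h by blast
    then have "\<forall>y\<in>P n. x + y \<in> \<Union>KK" using K by blast
    then show "\<exists>n. \<forall>y\<in>P n. x + y \<in> \<Union>KK" by blast
  qed
qed

lemma adic_open:
  fixes P :: "nat \<Rightarrow> dual set" and S :: "dual set"
  assumes "\<And>m n. m \<le> n \<Longrightarrow> P n \<subseteq> P m"
  shows "openin (adic_topology S P) U \<longleftrightarrow> (U \<subseteq> S \<and> (\<forall>x\<in>U. \<exists>n. \<forall>y\<in>P n. x + y \<in> U))"
  by (simp only: adic_topology_def topology_inverse'[OF adic_istop[OF assms]])




definition trunc :: "nat \<Rightarrow> dual \<Rightarrow> dual" where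
  "trunc n f = (\<lambda>m. if m \<le> n then f m else 0)"

definition sec :: "(nat \<Rightarrow> dual) \<Rightarrow> nat \<Rightarrow> dual" where
  "sec b = (\<lambda>n. trunc n (b n))"

lemma trunc_linrec: "trunc n f \<in> linrec"
  by (rule linrec_fs[of "Suc n"]) (simp add: trunc_def)

lemma conv_local:
  assumes "\<forall>j\<le>k. f j = f' j" "\<forall>j\<le>k. g j = g' j"
  shows "conv f g k = conv f' g' k"
  unfolding conv_def using assms by (intro sum.cong refl) auto

lemma conv_fs:
  assumes f: "\<forall>j\<ge>M. f j = 0" and g: "\<forall>j\<ge>M. g j = 0" and k: "k \<ge> 2 * M"
  shows "conv f g k = 0"
  unfolding conv_def
proof (intro sum.neutral ballI)
  fix j assume j: "j \<in> {..k}"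
  show "of_nat (k choose j) * f j * g (k - j) = 0"
  proof (cases "j \<ge> M")
    case True
    then show ?thesis using f by simp
  next
    case False
    then have "k - j \<ge> M" using k by arith
    then show ?thesis using g by simp
  qed
qed

lemma sec_inv: "b \<in> inv_lim UNIV Ipow \<Longrightarrow> sec b \<in> inv_lim linrec Jpow"
proof -
  assume b: "b \<in> inv_lim UNIV Ipow"
  have "sec b (Suc n) - sec b n \<in> Jpow (Suc n)" for n
  proof (rule fs_Jpow[where M = "Suc (Suc n)"])
    have d: "b (Suc n) - b n \<in> Ipow (Suc n)" using b by (simp add: inv_lim_def)
    show "\<forall>k<Suc n. (sec b (Suc n) - sec b n) k = 0"
    proof (intro allI impI)
      fix k assume k: "k < Suc n"
      have "(b (Suc n) - b n) k = 0" using Ipow_vanish[OF d k] .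
      then show "(sec b (Suc n) - sec b n) k = 0" using k by (simp add: sec_def trunc_def)
    qed
    show "\<forall>k\<ge>Suc (Suc n). (sec b (Suc n) - sec b n) k = 0" by (simp add: sec_def trunc_def)
  qed
  then show ?thesis unfolding inv_lim_def using trunc_linrec by (simp add: sec_def)
qed

lemma sec_resp: "lim_eq Ipow b b' \<Longrightarrow> lim_eq Jpow (sec b) (sec b')"
  unfolding lim_eq_def
proof (intro allI)
  fix n
  assume h: "\<forall>n. b n - b' n \<in> Ipow (Suc n)"
  show "sec b n - sec b' n \<in> Jpow (Suc n)"
  proof (rule fs_Jpow[where M = "Suc n"])
    show "\<forall>k<Suc n. (sec b n - sec b' n) k = 0"
    proof (intro allI impI)
      fix k assume k: "k < Suc n"
      have "(b n - b' n) k = 0" using Ipow_vanish[OF h[rule_format] k] .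
      then show "(sec b n - sec b' n) k = 0" using k by (simp add: sec_def trunc_def)
    qed
    show "\<forall>k\<ge>Suc n. (sec b n - sec b' n) k = 0" by (simp add: sec_def trunc_def)
  qed
qed

lemma sec_approx: "lim_eq Ipow (sec b) b"
  unfolding lim_eq_def
  by (intro allI vanish_Ipow) (simp add: sec_def trunc_def)

lemma sec_add: "lim_eq Jpow (sec (\<lambda>n. b n + b' n)) (\<lambda>n. sec b n + sec b' n)"
  unfolding lim_eq_def
  by (intro allI fs_Jpow[where M = 0]) (simp_all add: sec_def trunc_def)

lemma sec_scal: "lim_eq Jpow (sec (\<lambda>n m. c * b n m)) (\<lambda>n m. c * sec b n m)"
  unfolding lim_eq_def
  by (intro allI fs_Jpow[where M = 0]) (simp_all add: sec_def trunc_def)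

lemma sec_eps: "lim_eq Jpow (sec (\<lambda>n. eps)) (\<lambda>n. eps)"
  unfolding lim_eq_def
  by (intro allI fs_Jpow[where M = 0]) (simp_all add: sec_def trunc_def eps_def)

lemma sec_conv: "lim_eq Jpow (sec (\<lambda>n. conv (b n) (b' n))) (\<lambda>n. conv (sec b n) (sec b' n))"
  unfolding lim_eq_def
proof (intro allI)
  fix n
  show "sec (\<lambda>n. conv (b n) (b' n)) n - conv (sec b n) (sec b' n) \<in> Jpow (Suc n)"
  proof (rule fs_Jpow[where M = "2 * Suc n"])
    show "\<forall>k<Suc n. (sec (\<lambda>n. conv (b n) (b' n)) n - conv (sec b n) (sec b' n)) k = 0"
    proof (intro allI impI)
      fix k assume k: "k < Suc n"
      have "conv (sec b n) (sec b' n) k = conv (b n) (b' n) k"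
        by (rule conv_local) (use k in \<open>auto simp: sec_def trunc_def\<close>)
      then show "(sec (\<lambda>n. conv (b n) (b' n)) n - conv (sec b n) (sec b' n)) k = 0"
        using k by (simp add: sec_def trunc_def)
    qed
    show "\<forall>k\<ge>2 * Suc n. (sec (\<lambda>n. conv (b n) (b' n)) n - conv (sec b n) (sec b' n)) k = 0"
    proof (intro allI impI)
      fix k assume k: "k \<ge> 2 * Suc n"
      have "conv (sec b n) (sec b' n) k = 0"
        by (rule conv_fs[where M = "Suc n"]) (use k in \<open>auto simp: sec_def trunc_def\<close>)
      then show "(sec (\<lambda>n. conv (b n) (b' n)) n - conv (sec b n) (sec b' n)) k = 0"
        using k by (simp add: sec_def trunc_def)
    qed
  qed
qed

lemma a_eq_w: "(\<lambda>n. phi1 - (\<Sum>k\<le>n. (\<lambda>m. (1 / fact k) * cpow xi k m))) = w"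
proof (rule ext, rule ext)
  fix n m
  have "(\<Sum>k\<le>n. (\<lambda>m. (1 / fact k) * cpow xi k m)) m = (\<Sum>k\<le>n. (1 / fact k) * cpow xi k m)"
    by (rule sum_fun_apply)
  also have "\<dots> = (\<Sum>k\<le>n. if k = m then 1 else 0)"
    by (intro sum.cong refl) (simp add: cpow_xi)
  also have "\<dots> = (if m \<le> n then 1 else 0)" by simp
  finally show "(phi1 - (\<Sum>k\<le>n. (\<lambda>m. (1 / fact k) * cpow xi k m))) m = w n m"
    by (simp add: phi1_def w_def)
qed

lemma w_inv: "w \<in> inv_lim linrec Jpow"
  unfolding inv_lim_def mem_Collect_eq
proof (intro conjI allI)
  fix n
  show "w n \<in> linrec" by (rule w_linrec)
  show "w (Suc n) - w n \<in> Jpow (Suc n)"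
    by (rule fs_Jpow[where M = "Suc (Suc n)"]) (auto simp: w_def)
qed

lemma w_ker: "lim_eq Ipow w (\<lambda>n. 0)"
  unfolding lim_eq_def
  by (intro allI vanish_Ipow) (simp add: w_def)

lemma w_nz: "\<not> lim_eq Jpow w (\<lambda>n. 0)"
proof
  assume "lim_eq Jpow w (\<lambda>n. 0)"
  then have "w 1 - 0 \<in> Jpow (Suc 1)" unfolding lim_eq_def by blast
  then have "w 1 \<in> Jpow 2" by (simp add: numeral_2_eq_2)
  then show False using w_not_Jpow2 by blast
qed

lemma openJ: "openin (adic_topology S Jpow) U \<longleftrightarrow> (U \<subseteq> S \<and> (\<forall>x\<in>U. \<exists>n. \<forall>y\<in>Jpow n. x + y \<in> U))"
  by (rule adic_open) (rule Jpow_anti)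

lemma openI: "openin (adic_topology S Ipow) U \<longleftrightarrow> (U \<subseteq> S \<and> (\<forall>x\<in>U. \<exists>n. \<forall>y\<in>Ipow n. x + y \<in> U))"
  by (rule adic_open) (rule Ipow_anti)

theorem mainTheorem5:
  shows
   \<comment> \<open>the induced map iota-hat (identity on representatives) is well defined\<close>
   "(\<forall>a\<in>inv_lim linrec Jpow. a \<in> inv_lim UNIV Ipow) \<and>
    (\<forall>a\<in>inv_lim linrec Jpow. \<forall>b\<in>inv_lim linrec Jpow. lim_eq Jpow a b \<longrightarrow> lim_eq Ipow a b) \<and>
   \<comment> \<open>surjective\<close>
    (\<forall>b\<in>inv_lim UNIV Ipow. \<exists>a\<in>inv_lim linrec Jpow. lim_eq Ipow a b) \<and>
   \<comment> \<open>split: a section which is a well-defined algebra homomorphism\<close>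
    (\<exists>s. (\<forall>b\<in>inv_lim UNIV Ipow. s b \<in> inv_lim linrec Jpow) \<and>
         (\<forall>b\<in>inv_lim UNIV Ipow. \<forall>b'\<in>inv_lim UNIV Ipow.
             lim_eq Ipow b b' \<longrightarrow> lim_eq Jpow (s b) (s b')) \<and>
         (\<forall>b\<in>inv_lim UNIV Ipow. lim_eq Ipow (s b) b) \<and>
         (\<forall>b\<in>inv_lim UNIV Ipow. \<forall>b'\<in>inv_lim UNIV Ipow.
             lim_eq Jpow (s (\<lambda>n. b n + b' n)) (\<lambda>n. s b n + s b' n)) \<and>
         (\<forall>b\<in>inv_lim UNIV Ipow. \<forall>c::complex.
             lim_eq Jpow (s (\<lambda>n m. c * b n m)) (\<lambda>n m. c * s b n m)) \<and>
         (\<forall>b\<in>inv_lim UNIV Ipow. \<forall>b'\<in>inv_lim UNIV Ipow.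
             lim_eq Jpow (s (\<lambda>n. conv (b n) (b' n))) (\<lambda>n. conv (s b n) (s b' n))) \<and>
         lim_eq Jpow (s (\<lambda>n. eps)) (\<lambda>n. eps)) \<and>
   \<comment> \<open>not injective\<close>
    (\<exists>a\<in>inv_lim linrec Jpow. lim_eq Ipow a (\<lambda>n. 0) \<and> \<not> lim_eq Jpow a (\<lambda>n. 0)) \<and>
   \<comment> \<open>explicit non-zero kernel element\<close>
    (let a = (\<lambda>n. phi1 - (\<Sum>k\<le>n. (\<lambda>m. (1 / fact k) * cpow xi k m))) in
       a \<in> inv_lim linrec Jpow \<and> lim_eq Ipow a (\<lambda>n. 0) \<and> \<not> lim_eq Jpow a (\<lambda>n. 0)) \<and>
   \<comment> \<open>J-adic topology strictly finer than the one induced from the I-adic topology\<close>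
    (\<forall>U. openin (subtopology (adic_topology UNIV Ipow) linrec) U
          \<longrightarrow> openin (adic_topology linrec Jpow) U) \<and>
    \<not> (\<forall>U. openin (adic_topology linrec Jpow) U
          \<longrightarrow> openin (subtopology (adic_topology UNIV Ipow) linrec) U)"
proof -
  have P1: "\<forall>a\<in>inv_lim linrec Jpow. a \<in> inv_lim UNIV Ipow"
    using Jpow_Ipow by (auto simp: inv_lim_def)
  have P2: "\<forall>a\<in>inv_lim linrec Jpow. \<forall>b\<in>inv_lim linrec Jpow. lim_eq Jpow a b \<longrightarrow> lim_eq Ipow a b"
    using Jpow_Ipow unfolding lim_eq_def by blast
  have P3: "\<forall>b\<in>inv_lim UNIV Ipow. \<exists>a\<in>inv_lim linrec Jpow. lim_eq Ipow a b"
    using sec_inv sec_approx by blast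
  have P4: "\<exists>s. (\<forall>b\<in>inv_lim UNIV Ipow. s b \<in> inv_lim linrec Jpow) \<and>
         (\<forall>b\<in>inv_lim UNIV Ipow. \<forall>b'\<in>inv_lim UNIV Ipow.
             lim_eq Ipow b b' \<longrightarrow> lim_eq Jpow (s b) (s b')) \<and>
         (\<forall>b\<in>inv_lim UNIV Ipow. lim_eq Ipow (s b) b) \<and>
         (\<forall>b\<in>inv_lim UNIV Ipow. \<forall>b'\<in>inv_lim UNIV Ipow.
             lim_eq Jpow (s (\<lambda>n. b n + b' n)) (\<lambda>n. s b n + s b' n)) \<and>
         (\<forall>b\<in>inv_lim UNIV Ipow. \<forall>c::complex.
             lim_eq Jpow (s (\<lambda>n m. c * b n m)) (\<lambda>n m. c * s b n m)) \<and>
         (\<forall>b\<in>inv_lim UNIV Ipow. \<forall>b'\<in>inv_lim UNIV Ipow.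
             lim_eq Jpow (s (\<lambda>n. conv (b n) (b' n))) (\<lambda>n. conv (s b n) (s b' n))) \<and>
         lim_eq Jpow (s (\<lambda>n. eps)) (\<lambda>n. eps)"
    apply (rule exI[of _ sec])
    apply (intro conjI)
    subgoal by (blast intro: sec_inv)
    subgoal by (blast intro: sec_resp)
    subgoal by (blast intro: sec_approx)
    subgoal by (blast intro: sec_add)
    subgoal by (blast intro: sec_scal)
    subgoal by (blast intro: sec_conv)
    subgoal by (rule sec_eps)
    done
  have P6: "let a = (\<lambda>n. phi1 - (\<Sum>k\<le>n. (\<lambda>m. (1 / fact k) * cpow xi k m))) in
       a \<in> inv_lim linrec Jpow \<and> lim_eq Ipow a (\<lambda>n. 0) \<and> \<not> lim_eq Jpow a (\<lambda>n. 0)"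
    unfolding Let_def a_eq_w using w_inv w_ker w_nz by blast
  have P5: "\<exists>a\<in>inv_lim linrec Jpow. lim_eq Ipow a (\<lambda>n. 0) \<and> \<not> lim_eq Jpow a (\<lambda>n. 0)"
    using w_inv w_ker w_nz by blast
  have P7: "\<forall>U. openin (subtopology (adic_topology UNIV Ipow) linrec) U
          \<longrightarrow> openin (adic_topology linrec Jpow) U"
  proof (intro allI impI)
    fix U assume "openin (subtopology (adic_topology UNIV Ipow) linrec) U"
    then obtain T where T: "openin (adic_topology UNIV Ipow) T" "U = T \<inter> linrec"
      by (auto simp: openin_subtopology)
    from T(1) have T': "\<forall>x\<in>T. \<exists>n. \<forall>y\<in>Ipow n. x + y \<in> T"
      by (simp add: openI)
    show "openin (adic_topology linrec Jpow) U"
      unfolding openJ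
    proof (intro conjI ballI)
      show "U \<subseteq> linrec" using T(2) by blast
      fix x assume x: "x \<in> U"
      then obtain n where n: "\<forall>y\<in>Ipow n. x + y \<in> T" using T' T(2) by blast
      have "\<forall>y\<in>Jpow n. x + y \<in> U"
      proof
        fix y assume y: "y \<in> Jpow n"
        then have "x + y \<in> T" using n Jpow_Ipow by blast
        moreover have "x + y \<in> linrec" using x T(2) Jpow_linrec[OF y] linrec_add by blast
        ultimately show "x + y \<in> U" using T(2) by blast
      qed
      then show "\<exists>n. \<forall>y\<in>Jpow n. x + y \<in> U" by blast
    qed
  qed
  have P8: "\<not> (\<forall>U. openin (adic_topology linrec Jpow) U
          \<longrightarrow> openin (subtopology (adic_topology UNIV Ipow) linrec) U)"
  proof
    assume h: "\<forall>U. openin (adic_topology linrec Jpow) U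
          \<longrightarrow> openin (subtopology (adic_topology UNIV Ipow) linrec) U"
    have "openin (adic_topology linrec Jpow) (Jpow 2)"
      unfolding openJ
    proof (intro conjI ballI)
      show "Jpow 2 \<subseteq> linrec" using Jpow_linrec by blast
      fix x assume "x \<in> Jpow 2"
      then have "\<forall>y\<in>Jpow 2. x + y \<in> Jpow 2" using Jpow_add by blast
      then show "\<exists>n. \<forall>y\<in>Jpow n. x + y \<in> Jpow 2" by blast
    qed
    then have "openin (subtopology (adic_topology UNIV Ipow) linrec) (Jpow 2)" using h by blast
    then obtain T where T: "openin (adic_topology UNIV Ipow) T" "Jpow 2 = T \<inter> linrec"
      by (auto simp: openin_subtopology)
    have "0 \<in> Jpow 2" by (rule Jpow_0)
    then have "0 \<in> T" using T(2) by blast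
    then obtain n where n: "\<forall>y\<in>Ipow n. 0 + y \<in> T"
      using T(1) by (auto simp: openI)
    have "w n \<in> Ipow n" by (rule vanish_Ipow) (simp add: w_def)
    then have "w n \<in> T" using n by auto
    then have "w n \<in> Jpow 2" using T(2) w_linrec by blast
    then show False using w_not_Jpow2 by blast
  qed
  show ?thesis
    apply (intro conjI)
    apply (rule P1)
    apply (rule P2)
    apply (rule P3)
    apply (rule P4)
    apply (rule P5)
    apply (rule P6)
    apply (rule P7)
    apply (rule P8)
    done
qed


end
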